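(* Let $G$ be a weakly-reversible chemical reaction network in $s$ species and $\mathbf{k}$ a field of characteristic zero. If the ideal $(\mathcal{E}_G)\subseteq\mathbf{k}[x_1,\dots,x_s]$ is prime, then $G$ is not catalytic.
   Context: A chemical reaction network (CRN) consists of positive integers $s,n$, a finite directed graph $G$ with vertex set $\{1,\dots,n\}$ and edge set $E(G)$, and an injective labeling of vertex $i$ by a monic monomial $\psi_i=\prod_{j=1}^s x_j^{y_{ij}}$. $G$ is weakly-reversible iff each connected component is strongly connected. The associated event-system $\mathcal{E}_G$ is the set of binomials $\psi_i-\psi_j$, one for each pair $\{i,j\}$ with $(i,j)\in E(G)$ or $(j,i)\in E(G)$, and $(\mathcal{E}_G)$ is the ideal it generates. The event-graph $\overline{G}$ has as vertices all monic monomials in $x_1,\dots,x_s$, with an edge $(N\psi_i,N\psi_j)$ for each $(i,j)\in E(G)$ and each monic monomial $N$. A weakly-reversible CRN is catalytic iff there exist monic monomials $M,N$ path-connected in $\overline{G}$ such that $M/\gcd(M,N)$ and $N/\gcd(M,N)$ are not path-connected in $\overline{G}$. *)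

theory Defs
  imports "HOL-Library.Poly_Mapping"
begin

(* Species are indexed by a finite type 'v (so s = CARD('v)).
  Monic monomials in x_v are exponent vectors 'v \<Rightarrow>\<^sub>0 nat (multiplication of
  monomials = addition of exponent vectors); polynomials in k[x_v] are
  finitely supported maps from monomials to coefficients.*)

type_synonym 'v monom = "'v \<Rightarrow>\<^sub>0 nat"
type_synonym ('v, 'k) mpoly = "('v \<Rightarrow>\<^sub>0 nat) \<Rightarrow>\<^sub>0 'k"

lift_definition monom_gcd :: "'v monom \<Rightarrow> 'v monom \<Rightarrow> 'v monom"
  is "\<lambda>f g x. min (f x) (g x)"
proof -
  fix f g :: "'v \<Rightarrow> nat"
  assume "finite {x. f x \<noteq> 0}"
  then show "finite {x. min (f x) (g x) \<noteq> 0}"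
    by (rule finite_subset[rotated]) auto
qed

(* Quotient M / D of monomials where D divides M: subtraction of exponents.*)
definition monom_div :: "'v monom \<Rightarrow> 'v monom \<Rightarrow> 'v monom" where
  "monom_div M D = M - D"

definition is_crn :: "nat \<Rightarrow> (nat \<times> nat) set \<Rightarrow> (nat \<Rightarrow> 'v monom) \<Rightarrow> bool" where
  "is_crn n E psi \<longleftrightarrow> 0 < n \<and> E \<subseteq> {..<n} \<times> {..<n} \<and> inj_on psi {..<n}"

definition weakly_reversible :: "nat \<Rightarrow> (nat \<times> nat) set \<Rightarrow> bool" where
  "weakly_reversible n E \<longleftrightarrow>
     (\<forall>i<n. \<forall>j<n. (i, j) \<in> (E \<union> E\<inverse>)\<^sup>* \<longrightarrow> (i, j) \<in> E\<^sup>*)"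

definition event_system :: "(nat \<times> nat) set \<Rightarrow> (nat \<Rightarrow> 'v monom) \<Rightarrow> ('v, 'k::comm_ring_1) mpoly set" where
  "event_system E psi =
     {Poly_Mapping.single (psi i) 1 - Poly_Mapping.single (psi j) 1 | i j. (i, j) \<in> E}"

definition ideal_generated :: "'a::comm_ring_1 set \<Rightarrow> 'a set" where
  "ideal_generated S = {p. \<exists>F c. finite F \<and> F \<subseteq> S \<and> p = (\<Sum>f\<in>F. c f * f)}"

definition prime_ideal :: "'a::comm_ring_1 set \<Rightarrow> bool" where
  "prime_ideal I \<longleftrightarrow> I \<noteq> UNIV \<and> (\<forall>a b. a * b \<in> I \<longrightarrow> a \<in> I \<or> b \<in> I)"

definition event_graph :: "(nat \<times> nat) set \<Rightarrow> (nat \<Rightarrow> 'v monom) \<Rightarrow> ('v monom \<times> 'v monom) set" where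
  "event_graph E psi = {(N + psi i, N + psi j) | N i j. (i, j) \<in> E}"

definition path_connected_eg :: "(nat \<times> nat) set \<Rightarrow> (nat \<Rightarrow> 'v monom) \<Rightarrow> 'v monom \<Rightarrow> 'v monom \<Rightarrow> bool" where
  "path_connected_eg E psi M N \<longleftrightarrow> (M, N) \<in> (event_graph E psi)\<^sup>*"

definition catalytic :: "nat \<Rightarrow> (nat \<times> nat) set \<Rightarrow> (nat \<Rightarrow> 'v monom) \<Rightarrow> bool" where
  "catalytic n E psi \<longleftrightarrow> weakly_reversible n E \<and>
     (\<exists>M N. path_connected_eg E psi M N \<and>
        \<not> path_connected_eg E psi (monom_div M (monom_gcd M N)) (monom_div N (monom_gcd M N)))"

end

theory Submission
  imports Defs
begin

definition phi :: "'a set \<Rightarrow> ('a \<Rightarrow>\<^sub>0 'k::comm_ring_1) \<Rightarrow> 'k" where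
  "phi C p = (\<Sum>m\<in>Poly_Mapping.keys p. if m \<in> C then Poly_Mapping.lookup p m else 0)"

lemma phi_superset:
  assumes "finite S" "Poly_Mapping.keys p \<subseteq> S"
  shows "phi C p = (\<Sum>m\<in>S. if m \<in> C then Poly_Mapping.lookup p m else 0)"
  unfolding phi_def
  by (rule sum.mono_neutral_left) (use assms in \<open>auto simp: in_keys_iff\<close>)

lemma phi_add: "phi C (p + q) = phi C p + phi C q"
proof -
  let ?S = "Poly_Mapping.keys p \<union> Poly_Mapping.keys q"
  have "phi C (p + q) = (\<Sum>m\<in>?S. if m \<in> C then Poly_Mapping.lookup (p+q) m else 0)"
    by (rule phi_superset) (auto dest: keys_add[THEN subsetD])
  also have "\<dots> = (\<Sum>m\<in>?S. (if m \<in> C then Poly_Mapping.lookup p m else 0) + (if m \<in> C then Poly_Mapping.lookup q m else 0))"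
    by (rule sum.cong) (auto simp: lookup_add)
  also have "\<dots> = phi C p + phi C q"
    by (simp add: sum.distrib phi_superset[symmetric])
  finally show ?thesis .
qed

lemma phi_diff: "phi C (p - q) = phi C p - phi C q"
proof -
  let ?S = "Poly_Mapping.keys p \<union> Poly_Mapping.keys q"
  have "phi C (p - q) = (\<Sum>m\<in>?S. if m \<in> C then Poly_Mapping.lookup (p-q) m else 0)"
    by (rule phi_superset) (auto simp: in_keys_iff lookup_minus)
  also have "\<dots> = (\<Sum>m\<in>?S. (if m \<in> C then Poly_Mapping.lookup p m else 0) - (if m \<in> C then Poly_Mapping.lookup q m else 0))"
    by (rule sum.cong) (auto simp: lookup_minus)
  also have "\<dots> = phi C p - phi C q"
    by (simp add: sum_subtractf phi_superset[symmetric])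
  finally show ?thesis .
qed

lemma phi_zero [simp]: "phi C 0 = 0"
  by (simp add: phi_def)

lemma phi_single: "phi C (Poly_Mapping.single m a) = (if m \<in> C then a else 0)"
proof -
  have "phi C (Poly_Mapping.single m a) = (\<Sum>x\<in>{m}. if x \<in> C then Poly_Mapping.lookup (Poly_Mapping.single m a) x else 0)"
    by (rule phi_superset) auto
  then show ?thesis by simp
qed

lemma phi_sum: "finite F \<Longrightarrow> phi C (\<Sum>f\<in>F. h f) = (\<Sum>f\<in>F. phi C (h f))"
  by (induction F rule: finite_induct) (auto simp: phi_add)

lemma update_eq_add:
  assumes "a \<notin> Poly_Mapping.keys f"
  shows "Poly_Mapping.update a b f = f + Poly_Mapping.single a b"
  using assms
  by (intro poly_mapping_eqI) (auto simp: lookup_update lookup_add lookup_single in_keys_iff when_def)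

lemma phi_mult_gen:
  fixes c :: "('v \<Rightarrow>\<^sub>0 nat) \<Rightarrow>\<^sub>0 'k::comm_ring_1"
  assumes closed: "\<And>K. K + x \<in> C \<longleftrightarrow> K + y \<in> C"
  shows "phi C (c * (Poly_Mapping.single x 1 - Poly_Mapping.single y 1)) = 0"
proof (induction c rule: update_induct)
  case const
  then show ?case by simp
next
  case (update f a b)
  have "Poly_Mapping.update a b f * (Poly_Mapping.single x 1 - Poly_Mapping.single y 1)
      = f * (Poly_Mapping.single x 1 - Poly_Mapping.single y 1)
        + (Poly_Mapping.single (a + x) b - Poly_Mapping.single (a + y) b)"
    using update(1) by (simp add: update_eq_add distrib_right right_diff_distrib mult_single)
  then show ?case using update(3) closed[of a]
    by (simp add: phi_add phi_diff phi_single)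
qed

lemma ideal_add:
  assumes "p \<in> ideal_generated S" "q \<in> ideal_generated S"
  shows "p + q \<in> ideal_generated S"
proof -
  obtain F1 c1 where 1: "finite F1" "F1 \<subseteq> S" "p = (\<Sum>f\<in>F1. c1 f * f)"
    using assms(1) unfolding ideal_generated_def by blast
  obtain F2 c2 where 2: "finite F2" "F2 \<subseteq> S" "q = (\<Sum>f\<in>F2. c2 f * f)"
    using assms(2) unfolding ideal_generated_def by blast
  define c where "c f = (if f \<in> F1 then c1 f else 0) + (if f \<in> F2 then c2 f else 0)" for f
  have "(\<Sum>f\<in>F1 \<union> F2. c f * f) = (\<Sum>f\<in>F1 \<union> F2. (if f \<in> F1 then c1 f * f else 0)) + (\<Sum>f\<in>F1 \<union> F2. (if f \<in> F2 then c2 f * f else 0))"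
    unfolding sum.distrib[symmetric] by (rule sum.cong) (auto simp: c_def distrib_right)
  also have "\<dots> = p + q"
    using 1 2 by (simp add: sum.inter_restrict[symmetric] Int_absorb1 Int_absorb2 Un_Int_distrib2 inf_commute)
  finally show ?thesis
    using 1 2 unfolding ideal_generated_def by (intro CollectI exI[of _ "F1 \<union> F2"] exI[of _ c]) auto
qed

lemma ideal_mult:
  assumes "p \<in> ideal_generated S"
  shows "a * p \<in> ideal_generated S"
proof -
  obtain F c where 1: "finite F" "F \<subseteq> S" "p = (\<Sum>f\<in>F. c f * f)"
    using assms unfolding ideal_generated_def by blast
  have "a * p = (\<Sum>f\<in>F. (a * c f) * f)"
    using 1 by (simp add: sum_distrib_left mult.assoc)
  then show ?thesis using 1 unfolding ideal_generated_def
    by (intro CollectI exI[of _ F] exI[of _ "\<lambda>f. a * c f"]) simp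
qed

lemma ideal_gen:
  assumes "f \<in> S" shows "f \<in> ideal_generated S"
  unfolding ideal_generated_def using assms
  by (intro CollectI exI[of _ "{f}"] exI[of _ "\<lambda>_. 1"]) simp

lemma ideal_zero: "0 \<in> ideal_generated S"
  unfolding ideal_generated_def
  by (intro CollectI exI[of _ "{}"] exI[of _ "\<lambda>_. 0"]) simp

lemma path_in_ideal:
  assumes "(a, b) \<in> (event_graph E psi)\<^sup>*"
  shows "(Poly_Mapping.single a 1 - Poly_Mapping.single b 1 :: ('v, 'k::comm_ring_1) mpoly)
           \<in> ideal_generated (event_system E psi)"
  using assms
proof (induction rule: rtrancl_induct)
  case base
  then show ?case by (simp add: ideal_zero)
next
  case (step y z)
  then obtain K i j where e: "y = K + psi i" "z = K + psi j" "(i, j) \<in> E"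
    unfolding event_graph_def by blast
  have g: "(Poly_Mapping.single (psi i) 1 - Poly_Mapping.single (psi j) 1 :: ('v, 'k) mpoly) \<in> event_system E psi"
    unfolding event_system_def using e(3) by blast
  have "(Poly_Mapping.single y 1 - Poly_Mapping.single z 1 :: ('v, 'k) mpoly)
     = Poly_Mapping.single K 1 * (Poly_Mapping.single (psi i) 1 - Poly_Mapping.single (psi j) 1)"
    using e by (simp add: right_diff_distrib mult_single)
  then have "(Poly_Mapping.single y 1 - Poly_Mapping.single z 1 :: ('v, 'k) mpoly) \<in> ideal_generated (event_system E psi)"
    using ideal_mult[OF ideal_gen[OF g]] by simp
  from ideal_add[OF step.IH this] show ?case by simp
qed

lemma phi_ideal:
  assumes closed: "\<And>K i j. (i, j) \<in> E \<Longrightarrow> (K + psi i \<in> C \<longleftrightarrow> K + psi j \<in> C)"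
    and p: "(p :: ('v, 'k::comm_ring_1) mpoly) \<in> ideal_generated (event_system E psi)"
  shows "phi C p = 0"
proof -
  obtain F c where 1: "finite F" "F \<subseteq> event_system E psi" "p = (\<Sum>f\<in>F. c f * f)"
    using p unfolding ideal_generated_def by blast
  have "phi C (c f * f) = 0" if "f \<in> F" for f
  proof -
    from that 1(2) obtain i j where "f = Poly_Mapping.single (psi i) 1 - Poly_Mapping.single (psi j) 1" "(i, j) \<in> E"
      unfolding event_system_def by blast
    then show ?thesis using phi_mult_gen[of "psi i" C "psi j" "c f"] closed by blast
  qed
  then show ?thesis using 1 by (simp add: phi_sum)
qed

lemma wr_sym:
  assumes crn: "is_crn n E psi" and wr: "weakly_reversible n E"
    and ab: "(a, b) \<in> event_graph E psi"
  shows "(b, a) \<in> (event_graph E psi)\<^sup>*"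
proof -
  obtain K i j where e: "a = K + psi i" "b = K + psi j" "(i, j) \<in> E"
    using ab unfolding event_graph_def by blast
  have ij: "i < n" "j < n" using crn e(3) unfolding is_crn_def by auto
  have "(j, i) \<in> (E \<union> E\<inverse>)\<^sup>*" using e(3) by blast
  then have ji: "(j, i) \<in> E\<^sup>*" using wr ij unfolding weakly_reversible_def by blast
  have "(K + psi x, K + psi y) \<in> (event_graph E psi)\<^sup>*" if "(x, y) \<in> E\<^sup>*" for x y
    using that
  proof (induction rule: rtrancl_induct)
    case base then show ?case by simp
  next
    case (step y z)
    then have "(K + psi y, K + psi z) \<in> event_graph E psi" unfolding event_graph_def by blast
    with step.IH show ?case by (rule rtrancl_into_rtrancl)
  qed
  from this[OF ji] e show ?thesis by simp
qed

lemma undirected_to_directed: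
  assumes crn: "is_crn n E psi" and wr: "weakly_reversible n E"
    and "(a, b) \<in> (event_graph E psi \<union> (event_graph E psi)\<inverse>)\<^sup>*"
  shows "(a, b) \<in> (event_graph E psi)\<^sup>*"
proof -
  have "event_graph E psi \<union> (event_graph E psi)\<inverse> \<subseteq> (event_graph E psi)\<^sup>*"
    using wr_sym[OF crn wr] by auto
  then have "(event_graph E psi \<union> (event_graph E psi)\<inverse>)\<^sup>* \<subseteq> (event_graph E psi)\<^sup>*"
    by (metis rtrancl_subset_rtrancl)
  with assms(3) show ?thesis by blast
qed

theorem theorem5p2:
  fixes n :: nat and E :: "(nat \<times> nat) set" and psi :: "nat \<Rightarrow> ('v::finite) monom"
  assumes "is_crn n E psi"
    and "weakly_reversible n E"
    and "prime_ideal (ideal_generated (event_system E psi :: ('v, 'k::field_char_0) mpoly set))"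
  shows "\<not> catalytic n E psi"
proof
  assume "catalytic n E psi"
  then obtain M N where MN: "(M, N) \<in> (event_graph E psi)\<^sup>*"
    and nc: "\<not> path_connected_eg E psi (monom_div M (monom_gcd M N)) (monom_div N (monom_gcd M N))"
    unfolding catalytic_def path_connected_eg_def by blast
  define g where "g = monom_gcd M N"
  define M' where "M' = monom_div M g"
  define N' where "N' = monom_div N g"
  let ?I = "ideal_generated (event_system E psi :: ('v, 'k) mpoly set)"
  have M: "M = g + M'" unfolding M'_def g_def monom_div_def
    by (rule poly_mapping_eqI) (simp add: lookup_add lookup_minus monom_gcd.rep_eq)
  have N: "N = g + N'" unfolding N'_def g_def monom_div_def
    by (rule poly_mapping_eqI) (simp add: lookup_add lookup_minus monom_gcd.rep_eq)
  have "(Poly_Mapping.single M 1 - Poly_Mapping.single N 1 :: ('v, 'k) mpoly) \<in> ?I"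
    by (rule path_in_ideal[OF MN])
  moreover have "(Poly_Mapping.single M 1 - Poly_Mapping.single N 1 :: ('v, 'k) mpoly)
      = Poly_Mapping.single g 1 * (Poly_Mapping.single M' 1 - Poly_Mapping.single N' 1)"
    using M N by (simp add: right_diff_distrib mult_single)
  ultimately have "Poly_Mapping.single g 1 \<in> ?I \<or> (Poly_Mapping.single M' 1 - Poly_Mapping.single N' 1 :: ('v, 'k) mpoly) \<in> ?I"
    using assms(3) unfolding prime_ideal_def by metis
  then show False
  proof
    assume "Poly_Mapping.single g 1 \<in> ?I"
    from phi_ideal[where C=UNIV, OF _ this] show False by (simp add: phi_single)
  next
    assume d: "(Poly_Mapping.single M' 1 - Poly_Mapping.single N' 1 :: ('v, 'k) mpoly) \<in> ?I"
    define R where "R = (event_graph E psi \<union> (event_graph E psi)\<inverse>)\<^sup>*"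
    define C where "C = {m. (M', m) \<in> R}"
    have closed: "K + psi i \<in> C \<longleftrightarrow> K + psi j \<in> C" if "(i, j) \<in> E" for K i j
    proof -
      have e: "(K + psi i, K + psi j) \<in> event_graph E psi" using that unfolding event_graph_def by blast
      show ?thesis
      proof
        assume "K + psi i \<in> C"
        then show "K + psi j \<in> C" using e unfolding C_def R_def
          by (auto intro: rtrancl_into_rtrancl)
      next
        assume "K + psi j \<in> C"
        then show "K + psi i \<in> C" using e unfolding C_def R_def
          by (auto intro: rtrancl_into_rtrancl)
      qed
    qed
    have "phi C (Poly_Mapping.single M' 1 - Poly_Mapping.single N' 1 :: ('v, 'k) mpoly) = 0"
      using phi_ideal[OF closed d] by blast
    moreover have "M' \<in> C" unfolding C_def R_def by simp
    ultimately have "N' \<in> C" by (simp add: phi_diff phi_single split: if_splits)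
    then have "(M', N') \<in> (event_graph E psi)\<^sup>*"
      using undirected_to_directed[OF assms(1,2)] unfolding C_def R_def by blast
    with nc show False unfolding path_connected_eg_def M'_def N'_def g_def by simp
  qed
qed

end
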